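(* Let $G=(V,E)$ be a connected undirected graph with $n=|V|$ nodes, let $\beta$ be a finite set (batch) of new edges on $V$, and let $G'=(V,E\cup\beta)$. For nodes $s\neq t$, let $d_s(t)$, $\sigma_{st}$ and $\mathcal{S}_{st}$ denote the distance, the number of shortest paths and the set of shortest paths from $s$ to $t$ in $G$, and let $d'_s(t)$, $\sigma'_{st}$, $\mathcal{S}'_{st}$ denote the same quantities in $G'$. Let $S=\{p_{(1)},\dots,p_{(r)}\}$ be a set of $r$ shortest paths of $G$ sampled according to $\pi_G$, i.e. for each $k=1,\dots,r$ and each shortest path $p_{st}$ of $G$ between distinct nodes $s,t$, $\Pr(p_{(k)}=p_{st})=\pi_G(p_{st})=\frac{1}{n(n-1)}\cdot\frac{1}{\sigma_{st}}$ (equivalently: an ordered pair $(s,t)$ of distinct nodes is chosen uniformly at random and then a path is chosen uniformly at random from $\mathcal{S}_{st}$). Let $\mathcal{P}$ be the procedure that builds $S'=\{p'_{(1)},\dots,p'_{(r)}\}$ by replacing each sampled path $p_{(k)}=p_{st}\in S$ (with endpoints $s,t$) by a path $p'_{st}$ according to the rules: (1) $p'_{st}=p_{st}$ if $d'_s(t)=d_s(t)$ and $\sigma'_{st}=\sigma_{st}$; (2) otherwise, $p'_{st}$ is selected uniformly at random among $\mathcal{S}'_{st}$. Then each $p'_{st}$ is a shortest path of $G'$, and for every shortest path $p'_{xy}$ of $G'$ between distinct nodes $x,y$ and every $k=1,\dots,r$, \[\Pr(p'_{(k)}=p'_{xy})=\frac{1}{n(n-1)}\cdot\frac{1}{\s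igma'_{xy}}.\]
   Context: Shortest paths, distances and path counts are taken in the (undirected) graphs $G$ and $G'$; $G'$ is obtained from $G$ by inserting the edges of the batch $\beta$ (edge insertions only). *)

theory Defs
  imports "HOL-Probability.Probability"
begin

definition ugraph :: "'a set \<Rightarrow> 'a set set \<Rightarrow> bool" where
  "ugraph V E \<longleftrightarrow> finite V \<and> (\<forall>e\<in>E. \<exists>u v. e = {u, v} \<and> u \<noteq> v \<and> u \<in> V \<and> v \<in> V)"

definition walk :: "'a set \<Rightarrow> 'a set set \<Rightarrow> 'a list \<Rightarrow> bool" where
  "walk V E p \<longleftrightarrow> p \<noteq> [] \<and> set p \<subseteq> V \<and>
     (\<forall>i. Suc i < length p \<longrightarrow> {p ! i, p ! Suc i} \<in> E)"

definition connected_graph :: "'a set \<Rightarrow> 'a set set \<Rightarrow> bool" where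
  "connected_graph V E \<longleftrightarrow>
     (\<forall>s\<in>V. \<forall>t\<in>V. \<exists>p. walk V E p \<and> hd p = s \<and> last p = t)"

definition dist_g :: "'a set \<Rightarrow> 'a set set \<Rightarrow> 'a \<Rightarrow> 'a \<Rightarrow> nat" where
  "dist_g V E s t = (LEAST d. \<exists>p. walk V E p \<and> hd p = s \<and> last p = t \<and> length p = Suc d)"

definition shortest_paths :: "'a set \<Rightarrow> 'a set set \<Rightarrow> 'a \<Rightarrow> 'a \<Rightarrow> 'a list set" where
  "shortest_paths V E s t =
     {p. walk V E p \<and> hd p = s \<and> last p = t \<and> length p = Suc (dist_g V E s t)}"

definition num_sp :: "'a set \<Rightarrow> 'a set set \<Rightarrow> 'a \<Rightarrow> 'a \<Rightarrow> nat" where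
  "num_sp V E s t = card (shortest_paths V E s t)"

definition pi_G :: "'a set \<Rightarrow> 'a set set \<Rightarrow> 'a list pmf" where
  "pi_G V E = do {
     st \<leftarrow> pmf_of_set {(s, t). s \<in> V \<and> t \<in> V \<and> s \<noteq> t};
     pmf_of_set (shortest_paths V E (fst st) (snd st)) }"

definition update_path :: "'a set \<Rightarrow> 'a set set \<Rightarrow> 'a set set \<Rightarrow> 'a list \<Rightarrow> 'a list pmf" where
  "update_path V E E' p =
     (let s = hd p; t = last p in
      if dist_g V E' s t = dist_g V E s t \<and> num_sp V E' s t = num_sp V E s t
      then return_pmf p
      else pmf_of_set (shortest_paths V E' s t))"

definition sample_S :: "'a set \<Rightarrow> 'a set set \<Rightarrow> nat \<Rightarrow> (nat \<Rightarrow> 'a list) pmf" where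
  "sample_S V E r = Pi_pmf {1..r} [] (\<lambda>_. pi_G V E)"

definition sample_S' :: "'a set \<Rightarrow> 'a set set \<Rightarrow> 'a set set \<Rightarrow> nat \<Rightarrow> (nat \<Rightarrow> 'a list) pmf" where
  "sample_S' V E E' r =
     sample_S V E r \<bind> (\<lambda>S. Pi_pmf {1..r} [] (\<lambda>k. update_path V E E' (S k)))"

end

theory Submission
  imports Defs
begin

lemma walk_mono: "walk V E p \<Longrightarrow> E \<subseteq> E' \<Longrightarrow> walk V E' p"
  unfolding walk_def by blast

lemma conn_mono: "connected_graph V E \<Longrightarrow> E \<subseteq> E' \<Longrightarrow> connected_graph V E'"
  unfolding connected_graph_def by (meson walk_mono)

lemma sp_ne:
  assumes "connected_graph V E" "s \<in> V" "t \<in> V"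
  shows "shortest_paths V E s t \<noteq> {}"
proof -
  obtain p where p: "walk V E p" "hd p = s" "last p = t"
    using assms unfolding connected_graph_def by blast
  hence "p \<noteq> []" unfolding walk_def by auto
  hence "\<exists>d. \<exists>p. walk V E p \<and> hd p = s \<and> last p = t \<and> length p = Suc d"
    using p by (intro exI[of _ "length p - 1"] exI[of _ p]) auto
  from LeastI_ex[OF this] show ?thesis
    unfolding shortest_paths_def dist_g_def by auto
qed

lemma sp_fin:
  assumes "finite V"
  shows "finite (shortest_paths V E s t)"
proof -
  have "shortest_paths V E s t \<subseteq> {xs. set xs \<subseteq> V \<and> length xs = Suc (dist_g V E s t)}"
    unfolding shortest_paths_def walk_def by auto
  thus ?thesis using finite_lists_length_eq[OF assms] finite_subset by blast
qed

lemma sp_hd_last: "p \<in> shortest_paths V E s t \<Longrightarrow> hd p = s \<and> last p = t"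
  unfolding shortest_paths_def by auto

lemma sp_eq:
  assumes "finite V" "E \<subseteq> E'" "dist_g V E' s t = dist_g V E s t"
    "num_sp V E' s t = num_sp V E s t"
  shows "shortest_paths V E s t = shortest_paths V E' s t"
proof -
  have sub: "shortest_paths V E s t \<subseteq> shortest_paths V E' s t"
    unfolding shortest_paths_def using assms(2,3) walk_mono by auto
  show ?thesis
    by (rule card_subset_eq[OF sp_fin[OF assms(1)] sub])
       (use assms(4) in \<open>simp add: num_sp_def\<close>)
qed

lemma upd_bind:
  assumes "finite V" "E \<subseteq> E'" "connected_graph V E" "s \<in> V" "t \<in> V"
  shows "pmf_of_set (shortest_paths V E s t) \<bind> update_path V E E'
       = pmf_of_set (shortest_paths V E' s t)"
proof -
  have ne: "shortest_paths V E s t \<noteq> {}" by (rule sp_ne[OF assms(3-5)])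
  have fin: "finite (shortest_paths V E s t)" by (rule sp_fin[OF assms(1)])
  show ?thesis
  proof (cases "dist_g V E' s t = dist_g V E s t \<and> num_sp V E' s t = num_sp V E s t")
    case True
    have "pmf_of_set (shortest_paths V E s t) \<bind> update_path V E E'
        = pmf_of_set (shortest_paths V E s t) \<bind> return_pmf"
    proof (rule bind_pmf_cong)
      fix p assume "p \<in> set_pmf (pmf_of_set (shortest_paths V E s t))"
      hence "p \<in> shortest_paths V E s t" using ne fin by simp
      hence "hd p = s" "last p = t" using sp_hd_last[of p V E s t] by auto
      thus "update_path V E E' p = return_pmf p" using True by (simp add: update_path_def Let_def)
    qed simp
    also have "\<dots> = pmf_of_set (shortest_paths V E' s t)"
      using sp_eq[OF assms(1,2)] True by (simp add: bind_return_pmf')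
    finally show ?thesis .
  next
    case False
    have "pmf_of_set (shortest_paths V E s t) \<bind> update_path V E E'
        = pmf_of_set (shortest_paths V E s t) \<bind> (\<lambda>_. pmf_of_set (shortest_paths V E' s t))"
    proof (rule bind_pmf_cong)
      fix p assume "p \<in> set_pmf (pmf_of_set (shortest_paths V E s t))"
      hence "p \<in> shortest_paths V E s t" using ne fin by simp
      hence "hd p = s" "last p = t" using sp_hd_last[of p V E s t] by auto
      thus "update_path V E E' p = pmf_of_set (shortest_paths V E' s t)" using False
        unfolding update_path_def Let_def by auto
    qed simp
    also have "\<dots> = pmf_of_set (shortest_paths V E' s t)" by simp
    finally show ?thesis .
  qed
qed

theorem lemma2:
  fixes V :: "'a set" and E \<beta> :: "'a set set" and r :: nat
  assumes "ugraph V E" and "connected_graph V E"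
    and "ugraph V \<beta>" and "finite \<beta>"
    and "card V \<ge> 2"
  shows "(\<forall>p \<in> set_pmf (pi_G V E). \<forall>q \<in> set_pmf (update_path V E (E \<union> \<beta>) p).
            q \<in> shortest_paths V (E \<union> \<beta>) (hd p) (last p))
    \<and> (\<forall>k \<in> {1..r}. \<forall>x \<in> V. \<forall>y \<in> V. \<forall>q. x \<noteq> y \<longrightarrow> q \<in> shortest_paths V (E \<union> \<beta>) x y \<longrightarrow>
          pmf (map_pmf (\<lambda>S'. S' k) (sample_S' V E (E \<union> \<beta>) r)) q
            = 1 / (real (card V) * (real (card V) - 1)) * (1 / real (num_sp V (E \<union> \<beta>) x y)))"
proof -
  define E' where "E' = E \<union> \<beta>"
  have finV: "finite V" using assms(1) unfolding ugraph_def by auto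
  have sub: "E \<subseteq> E'" unfolding E'_def by auto
  have conn: "connected_graph V E'" using conn_mono[OF assms(2) sub] .
  define P where "P = {(s, t). s \<in> V \<and> t \<in> V \<and> s \<noteq> t}"
  have PV: "P \<subseteq> V \<times> V" unfolding P_def by auto
  have finP: "finite P" using finite_subset[OF PV] finV by auto
  have cardP: "card P = card V * card V - card V"
  proof -
    have "P = V \<times> V - (\<lambda>v. (v,v)) ` V" unfolding P_def by auto
    moreover have "card ((\<lambda>v. (v,v)) ` V) = card V" by (rule card_image) (auto simp: inj_on_def)
    moreover have "(\<lambda>v. (v,v)) ` V \<subseteq> V \<times> V" by auto
    moreover have "finite ((\<lambda>v. (v,v)) ` V)" using finV by simp
    ultimately show ?thesis using finV
      by (simp add: card_Diff_subset card_cartesian_product)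
  qed
  have neP: "P \<noteq> {}"
  proof
    assume "P = {}"
    hence "card V * card V - card V = 0" using cardP by simp
    moreover have "2 * card V \<le> card V * card V" using assms(5) by (rule mult_le_mono1)
    ultimately show False using assms(5) by linarith
  qed
  have pi: "pi_G V E = pmf_of_set P \<bind> (\<lambda>st. pmf_of_set (shortest_paths V E (fst st) (snd st)))"
    unfolding pi_G_def P_def by simp
  have D: "pi_G V E \<bind> update_path V E E' =
      pmf_of_set P \<bind> (\<lambda>st. pmf_of_set (shortest_paths V E' (fst st) (snd st)))"
    unfolding pi bind_assoc_pmf
    by (rule bind_pmf_cong) (use neP finP upd_bind[OF finV sub assms(2)] in \<open>auto simp: P_def\<close>)
  have part1: "\<forall>p \<in> set_pmf (pi_G V E). \<forall>q \<in> set_pmf (update_path V E E' p).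
            q \<in> shortest_paths V E' (hd p) (last p)"
  proof (intro ballI)
    fix p q assume p: "p \<in> set_pmf (pi_G V E)" and q: "q \<in> set_pmf (update_path V E E' p)"
    from p obtain s t where st: "(s,t) \<in> P" and ps: "p \<in> shortest_paths V E s t"
      unfolding pi using neP finP sp_ne[OF assms(2)] sp_fin[OF finV] by (auto simp: P_def)
    have sV: "s \<in> V" "t \<in> V" using st by (auto simp: P_def)
    have hl: "hd p = s" "last p = t" using sp_hd_last[OF ps] by auto
    show "q \<in> shortest_paths V E' (hd p) (last p)"
    proof (cases "dist_g V E' s t = dist_g V E s t \<and> num_sp V E' s t = num_sp V E s t")
      case True
      then show ?thesis using q ps sp_eq[OF finV sub] hl
        by (auto simp: update_path_def Let_def)
    next
      case False
      hence "update_path V E E' p = pmf_of_set (shortest_paths V E' s t)"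
        using hl unfolding update_path_def Let_def by auto
      hence "q \<in> set_pmf (pmf_of_set (shortest_paths V E' s t))" using q by simp
      hence "q \<in> shortest_paths V E' s t"
        using set_pmf_of_set[OF sp_ne[OF conn sV] sp_fin[OF finV]] by blast
      then show ?thesis using hl by simp
    qed
  qed
  have part2: "pmf (map_pmf (\<lambda>S'. S' k) (sample_S' V E E' r)) q
            = 1 / (real (card V) * (real (card V) - 1)) * (1 / real (num_sp V E' x y))"
    if k: "k \<in> {1..r}" and xy: "x \<in> V" "y \<in> V" "x \<noteq> y" and q: "q \<in> shortest_paths V E' x y"
    for k x y q
  proof -
    have "map_pmf (\<lambda>S'. S' k) (sample_S' V E E' r)
        = sample_S V E r \<bind> (\<lambda>S. update_path V E E' (S k))"
      unfolding sample_S'_def map_bind_pmf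
      by (rule bind_pmf_cong) (use k in \<open>simp_all add: Pi_pmf_component\<close>)
    also have "\<dots> = map_pmf (\<lambda>S. S k) (sample_S V E r) \<bind> update_path V E E'"
      by (simp add: bind_map_pmf)
    also have "\<dots> = pi_G V E \<bind> update_path V E E'"
      unfolding sample_S_def using k by (simp add: Pi_pmf_component)
    finally have eq: "map_pmf (\<lambda>S'. S' k) (sample_S' V E E' r) =
        pmf_of_set P \<bind> (\<lambda>st. pmf_of_set (shortest_paths V E' (fst st) (snd st)))"
      using D by simp
    have hlq: "hd q = x" "last q = y" using sp_hd_last[OF q] by auto
    have xyP: "(x,y) \<in> P" using xy by (auto simp: P_def)
    have "(\<Sum>st\<in>P. pmf (pmf_of_set (shortest_paths V E' (fst st) (snd st))) q)
        = (\<Sum>st\<in>P. if st = (x,y) then 1 / real (num_sp V E' x y) else 0)"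
    proof (rule sum.cong)
      fix st assume "st \<in> P"
      then obtain s t where st: "st = (s,t)" "s \<in> V" "t \<in> V" by (auto simp: P_def)
      show "pmf (pmf_of_set (shortest_paths V E' (fst st) (snd st))) q =
          (if st = (x,y) then 1 / real (num_sp V E' x y) else 0)"
      proof (cases "st = (x,y)")
        case True
        then show ?thesis using q sp_ne[OF conn xy(1,2)] sp_fin[OF finV]
          by (simp add: num_sp_def)
      next
        case False
        hence "q \<notin> shortest_paths V E' s t" using sp_hd_last hlq st by metis
        hence "pmf (pmf_of_set (shortest_paths V E' s t)) q = 0"
          using sp_ne[OF conn st(2,3)] sp_fin[OF finV] by (simp add: pmf_of_set)
        then show ?thesis using False st by auto
      qed
    qed simp
    also have "\<dots> = 1 / real (num_sp V E' x y)"
      using finP xyP by (simp add: sum.delta)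
    finally have S: "(\<Sum>st\<in>P. pmf (pmf_of_set (shortest_paths V E' (fst st) (snd st))) q)
        = 1 / real (num_sp V E' x y)" .
    have cP: "real (card P) = real (card V) * (real (card V) - 1)"
    proof -
      have "card V \<le> card V * card V" by simp
      hence "real (card P) = real (card V) * real (card V) - real (card V)"
        using cardP by (simp add: of_nat_diff)
      thus ?thesis by (simp add: algebra_simps)
    qed
    show ?thesis unfolding eq
      by (subst pmf_bind_pmf_of_set[OF neP finP]) (simp add: S cP)
  qed
  show ?thesis using part1 part2 unfolding E'_def by blast
qed

end
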